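(* In the setting of the context, let $\pi_k$ be the policy implemented in episode $k$. On the event $\mathcal E_0=\{\theta^*\in\mathcal B_k\cap\mathcal C_k\text{ for all }k\}$, for every $k$ and $h$, \begin{align*} \widehat V_{k,h}(s^{\mathrm{on}}_{k,h})-V^{\pi_k}_h(s^{\mathrm{on}}_{k,h}) &\le \widehat V_{k,h+1}(s^{\mathrm{on}}_{k,h+1})-V^{\pi_k}_{h+1}(s^{\mathrm{on}}_{k,h+1})+\xi^{\mathrm{on}}_{k,h+1}\\ &\quad+2\min\Big\{\gamma_k\big\|\phi(\cdot\mid s^{\mathrm{on}}_{k,h},a^{\mathrm{on}}_{k,h})\widehat V_{k,h+1}\big\|_{(M^{\mathrm{all}}_k)^{-1}},\ \beta_k\big\|\phi(\cdot\mid s^{\mathrm{on}}_{k,h},a^{\mathrm{on}}_{k,h})\widehat V_{k,h+1}\big\|_{(M^{\mathrm{on}}_k)^{-1}}\Big\}, \end{align*} where $\xi^{\mathrm{on}}_{k,h+1}=P(\cdot\mid s^{\mathrm{on}}_{k,h},a^{\mathrm{on}}_{k,h})^\top(\widehat V_{k,h+1}-V^{\pi_k}_{h+1})-\big(\widehat V_{k,h+1}(s^{\mathrm{on}}_{k,h+1})-V^{\pi_k}_{h+1}(s^{\mathrm{on}}_{k,h+1})\big)$.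
   Context: Online linear mixture MDP $(\mathcal S,\mathcal A,P,r,H,s_1)$, known reward in $[0,1]$, $P(s'\mid s,a)=\langle\theta^*,\phi(s'\mid s,a)\rangle$ with known $\phi:\mathcal S\times\mathcal A\times\mathcal S\to\mathbb R^d$; $\phi(\cdot\mid s,a)\in\mathbb R^{d\times|\mathcal S|}$ has columns $\phi(s'\mid s,a)$ and rows $\phi_j(\cdot\mid s,a)$. $V^{\pi}_h$ is the online value function of policy $\pi$ at stage $h$ ($V^\pi_{H+1}=0$). O-O UCRL-VTR, in episode $k$, has positive definite matrices $M^{\mathrm{all}}_k,M^{\mathrm{on}}_k$, estimates $\widehat\theta^{\mathrm{all}}_k,\widehat\theta^{\mathrm{on}}_k$, radii $\gamma_k,\beta_k>0$, sets $\mathcal B_k=\{\theta:\|\theta-\widehat\theta^{\mathrm{all}}_k\|_{M^{\mathrm{all}}_k}\le\gamma_k\}$, $\mathcal C_k=\{\theta:\|\theta-\widehat\theta^{\mathrm{on}}_k\|_{M^{\mathrm{on}}_k}\le\beta_k\}$ ($\|x\|_A=\sqrt{x^\top Ax}$), optimistic values $\widehat Q_{k,H+1}\equiv0$, $\widehat Q_{k,h}(s,a)=r(s,a)+\max_{\theta\in\mathcal B_k\cap\mathcal C_k}\sum_j\theta_j\phi_j(\cdot\mid s,a)^\top\widehat V_{k,h+1}$, $\widehat V_{k,h}(s)=\max_a\widehat Q_{k,h}(s,a)$, and implements the greedy policy $\pi_{k,h}(s)\in\arg\max_a\widehat Q_{k,h}(s,a)$, generating states $s^{\mathrm{on}}_{k,h}$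 (with $s^{\mathrm{on}}_{k,1}=s_1$), actions $a^{\mathrm{on}}_{k,h}=\pi_{k,h}(s^{\mathrm{on}}_{k,h})$ and $s^{\mathrm{on}}_{k,h+1}\sim P(\cdot\mid s^{\mathrm{on}}_{k,h},a^{\mathrm{on}}_{k,h})$. *)

theory Defs
  imports "HOL-Analysis.Analysis"
begin

definition wnorm :: "real^'d^'d \<Rightarrow> real^'d \<Rightarrow> real" where
  "wnorm A x = sqrt (x \<bullet> (A *v x))"

definition pos_def :: "real^'d^'d \<Rightarrow> bool" where
  "pos_def M \<longleftrightarrow> transpose M = M \<and> (\<forall>x. x \<noteq> 0 \<longrightarrow> x \<bullet> (M *v x) > 0)"

definition ellipsoid :: "real^'d^'d \<Rightarrow> real^'d \<Rightarrow> real \<Rightarrow> (real^'d) set" where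
  "ellipsoid M c rad = {\<theta>. wnorm M (\<theta> - c) \<le> rad}"

text \<open>phi(.|s,a) V : the vector in R^d whose j-th entry is sum_{s'} phi_j(s'|s,a) V(s').\<close>
definition phiV :: "('s::finite \<Rightarrow> 'a \<Rightarrow> 's \<Rightarrow> real^'d) \<Rightarrow> 's \<Rightarrow> 'a \<Rightarrow> ('s \<Rightarrow> real) \<Rightarrow> real^'d" where
  "phiV \<phi> s a V = (\<Sum>s'\<in>UNIV. V s' *\<^sub>R \<phi> s a s')"

definition trans :: "real^'d \<Rightarrow> ('s \<Rightarrow> 'a \<Rightarrow> 's \<Rightarrow> real^'d) \<Rightarrow> 's \<Rightarrow> 'a \<Rightarrow> 's \<Rightarrow> real" where
  "trans \<theta> \<phi> s a s' = \<theta> \<bullet> \<phi> s a s'"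

text \<open>Optimistic value with n remaining stages (n = H+1-h), optimism over the parameter set K.\<close>
fun Vhat_aux :: "('s::finite \<Rightarrow> 'a::finite \<Rightarrow> real) \<Rightarrow> ('s \<Rightarrow> 'a \<Rightarrow> 's \<Rightarrow> real^'d) \<Rightarrow> (real^'d) set
    \<Rightarrow> nat \<Rightarrow> 's \<Rightarrow> real" where
  "Vhat_aux r \<phi> K 0 s = 0"
| "Vhat_aux r \<phi> K (Suc n) s =
     Max (range (\<lambda>a. r s a + (SUP \<theta>\<in>K. \<theta> \<bullet> phiV \<phi> s a (Vhat_aux r \<phi> K n))))"

definition Vhat :: "('s::finite \<Rightarrow> 'a::finite \<Rightarrow> real) \<Rightarrow> ('s \<Rightarrow> 'a \<Rightarrow> 's \<Rightarrow> real^'d) \<Rightarrow> (real^'d) set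
    \<Rightarrow> nat \<Rightarrow> nat \<Rightarrow> 's \<Rightarrow> real" where
  "Vhat r \<phi> K H h = Vhat_aux r \<phi> K (H + 1 - h)"

definition Qhat :: "('s::finite \<Rightarrow> 'a::finite \<Rightarrow> real) \<Rightarrow> ('s \<Rightarrow> 'a \<Rightarrow> 's \<Rightarrow> real^'d) \<Rightarrow> (real^'d) set
    \<Rightarrow> nat \<Rightarrow> nat \<Rightarrow> 's \<Rightarrow> 'a \<Rightarrow> real" where
  "Qhat r \<phi> K H h s a = r s a + (SUP \<theta>\<in>K. \<theta> \<bullet> phiV \<phi> s a (Vhat r \<phi> K H (h + 1)))"

text \<open>Value of a (nonstationary, deterministic) policy pi (pi h s = action at stage h),
  n remaining stages.\<close>
fun Vpi_aux :: "('s::finite \<Rightarrow> 'a \<Rightarrow> real) \<Rightarrow> ('s \<Rightarrow> 'a \<Rightarrow> 's \<Rightarrow> real) \<Rightarrow> nat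
    \<Rightarrow> (nat \<Rightarrow> 's \<Rightarrow> 'a) \<Rightarrow> nat \<Rightarrow> 's \<Rightarrow> real" where
  "Vpi_aux r P H \<pi> 0 s = 0"
| "Vpi_aux r P H \<pi> (Suc n) s =
     r s (\<pi> (H - n) s) + (\<Sum>s'\<in>UNIV. P s (\<pi> (H - n) s) s' * Vpi_aux r P H \<pi> n s')"

definition Vpi :: "('s::finite \<Rightarrow> 'a \<Rightarrow> real) \<Rightarrow> ('s \<Rightarrow> 'a \<Rightarrow> 's \<Rightarrow> real) \<Rightarrow> nat
    \<Rightarrow> (nat \<Rightarrow> 's \<Rightarrow> 'a) \<Rightarrow> nat \<Rightarrow> 's \<Rightarrow> real" where
  "Vpi r P H \<pi> h = Vpi_aux r P H \<pi> (H + 1 - h)"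

end

theory Submission
  imports Defs
begin

lemma pd_inv:
  fixes M :: "real^'d^'d"
  assumes "pos_def M"
  shows "M *v (matrix_inv M *v v) = v"
proof -
  have "\<forall>x. M *v x = 0 \<longrightarrow> x = 0"
    using assms unfolding pos_def_def by (metis inner_zero_right less_irrefl)
  then have "invertible M" using invertible_left_inverse matrix_left_invertible_ker by blast
  then have "M ** matrix_inv M = mat 1"
    unfolding matrix_inv_def invertible_def by (rule someI_ex[where P="\<lambda>A'. M ** A' = mat 1 \<and> A' ** M = mat 1", THEN conjunct1])
  then show ?thesis by (metis matrix_vector_mul_assoc matrix_vector_mul_lid)
qed

lemma pd_sym:
  fixes M :: "real^'d^'d"
  assumes "pos_def M"
  shows "x \<bullet> (M *v y) = y \<bullet> (M *v x)"
proof -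
  have "x \<bullet> (M *v y) = (x v* M) \<bullet> y" by (simp add: dot_lmul_matrix)
  also have "\<dots> = (transpose M *v x) \<bullet> y" by (simp add: transpose_matrix_vector)
  also have "\<dots> = (M *v x) \<bullet> y" using assms unfolding pos_def_def by simp
  finally show ?thesis by (simp add: inner_commute)
qed

lemma pd_nonneg:
  fixes M :: "real^'d^'d"
  assumes "pos_def M"
  shows "0 \<le> x \<bullet> (M *v x)"
  using assms unfolding pos_def_def by (cases "x = 0") (auto intro: less_imp_le)

lemma pd_cs:
  fixes M :: "real^'d^'d"
  assumes pd: "pos_def M"
  shows "(x \<bullet> (M *v y))^2 \<le> (x \<bullet> (M *v x)) * (y \<bullet> (M *v y))"
proof (cases "y = 0")
  case True then show ?thesis by simp
next
  case False
  let ?b = "y \<bullet> (M *v y)" and ?c = "x \<bullet> (M *v y)" and ?a = "x \<bullet> (M *v x)"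
  have bpos: "?b > 0" using pd False unfolding pos_def_def by auto
  define t where "t = - ?c / ?b"
  have "0 \<le> (x + t *\<^sub>R y) \<bullet> (M *v (x + t *\<^sub>R y))" by (rule pd_nonneg[OF pd])
  also have "\<dots> = ?a + t * (x \<bullet> (M *v y)) + t * (y \<bullet> (M *v x)) + t * t * ?b"
    by (simp add: matrix_vector_right_distrib inner_add_left inner_add_right algebra_simps)
  also have "\<dots> = ?a + 2 * t * ?c + t * t * ?b" using pd_sym[OF pd, of y x] by simp
  also have "\<dots> = ?a - ?c^2 / ?b" using bpos unfolding t_def by (simp add: field_simps power2_eq_square)
  finally have "?c^2 / ?b \<le> ?a" by simp
  then show ?thesis using bpos by (simp add: field_simps)
qed

lemma ell_bound:
  fixes M :: "real^'d^'d"
  assumes pd: "pos_def M" and w: "wnorm M x \<le> \<rho>"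
  shows "\<bar>x \<bullet> v\<bar> \<le> \<rho> * wnorm (matrix_inv M) v"
proof -
  define u where "u = matrix_inv M *v v"
  have v: "v = M *v u" using pd_inv[OF pd] u_def by simp
  have uu: "u \<bullet> (M *v u) = v \<bullet> (matrix_inv M *v v)" using v u_def by (simp add: inner_commute)
  have "\<bar>x \<bullet> v\<bar> = sqrt ((x \<bullet> (M *v u))^2)" using v by simp
  also have "\<dots> \<le> sqrt ((x \<bullet> (M *v x)) * (u \<bullet> (M *v u)))" by (rule real_sqrt_le_mono[OF pd_cs[OF pd]])
  also have "\<dots> = wnorm M x * wnorm (matrix_inv M) v" unfolding wnorm_def uu by (simp add: real_sqrt_mult)
  also have "\<dots> \<le> \<rho> * wnorm (matrix_inv M) v"
  proof -
    have "0 \<le> v \<bullet> (matrix_inv M *v v)" using uu pd_nonneg[OF pd, of u] by simp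
    then show ?thesis using w by (intro mult_right_mono) (auto simp: wnorm_def)
  qed
  finally show ?thesis .
qed

theorem lemmaC3:
  fixes r :: "'s::finite \<Rightarrow> 'a::finite \<Rightarrow> real"
    and \<phi> :: "'s \<Rightarrow> 'a \<Rightarrow> 's \<Rightarrow> real^'d::finite"
    and \<theta>star :: "real^'d"
    and H :: nat and s1 :: 's
    and Mall Mon :: "nat \<Rightarrow> real^'d^'d"
    and \<theta>all \<theta>on :: "nat \<Rightarrow> real^'d"
    and \<gamma> \<beta> :: "nat \<Rightarrow> real"
    and \<pi> :: "nat \<Rightarrow> nat \<Rightarrow> 's \<Rightarrow> 'a"
    and son :: "nat \<Rightarrow> nat \<Rightarrow> 's"
    and k h :: nat
  defines "P \<equiv> trans \<theta>star \<phi>"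
    and "K \<equiv> (\<lambda>k. ellipsoid (Mall k) (\<theta>all k) (\<gamma> k) \<inter> ellipsoid (Mon k) (\<theta>on k) (\<beta> k))"
  assumes reward: "\<And>s a. 0 \<le> r s a \<and> r s a \<le> 1"
    and P_nonneg: "\<And>s a s'. 0 \<le> P s a s'"
    and P_sum: "\<And>s a. (\<Sum>s'\<in>UNIV. P s a s') = 1"
    and Mall_pd: "\<And>k. pos_def (Mall k)"
    and Mon_pd: "\<And>k. pos_def (Mon k)"
    and \<gamma>_pos: "\<And>k. \<gamma> k > 0"
    and \<beta>_pos: "\<And>k. \<beta> k > 0"
    and greedy: "\<And>k h s a. Qhat r \<phi> (K k) H h s a \<le> Qhat r \<phi> (K k) H h s (\<pi> k h s)"
    and start: "\<And>k. son k 1 = s1"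
    and E0: "\<And>k. \<theta>star \<in> K k"
    and h_range: "1 \<le> h" "h \<le> H"
  shows "(let s = son k h; a = \<pi> k h s; s' = son k (h + 1);
             Vh = Vhat r \<phi> (K k) H; Vp = Vpi r P H (\<pi> k);
             \<xi> = (\<Sum>t\<in>UNIV. P s a t * (Vh (h + 1) t - Vp (h + 1) t))
                 - (Vh (h + 1) s' - Vp (h + 1) s')
         in Vh h s - Vp h s
            \<le> Vh (h + 1) s' - Vp (h + 1) s' + \<xi>
              + 2 * min (\<gamma> k * wnorm (matrix_inv (Mall k)) (phiV \<phi> s a (Vh (h + 1))))
                        (\<beta> k * wnorm (matrix_inv (Mon k)) (phiV \<phi> s a (Vh (h + 1)))))"
proof -
  define s where "s = son k h"
  define a where "a = \<pi> k h s"
  define Vn where "Vn = Vhat r \<phi> (K k) H (h + 1)"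
  define Vpn where "Vpn = Vpi r P H (\<pi> k) (h + 1)"
  define v where "v = phiV \<phi> s a Vn"
  define m where "m = min (\<gamma> k * wnorm (matrix_inv (Mall k)) v) (\<beta> k * wnorm (matrix_inv (Mon k)) v)"
  have hH: "H + 1 - h = Suc (H - h)" "H + 1 - (h + 1) = H - h" "H - (H - h) = h" using h_range by auto
  have Vn_aux: "Vn = Vhat_aux r \<phi> (K k) (H - h)" unfolding Vn_def Vhat_def using hH by simp
  have Q: "\<And>b. Qhat r \<phi> (K k) H h s b = r s b + (SUP \<theta>\<in>K k. \<theta> \<bullet> phiV \<phi> s b Vn)"
    unfolding Qhat_def Vn_def by simp
  have "Vhat r \<phi> (K k) H h s = Max (range (\<lambda>b. Qhat r \<phi> (K k) H h s b))"
    unfolding Vhat_def hH(1) Vhat_aux.simps Q Vn_aux by simp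
  also have "\<dots> = Qhat r \<phi> (K k) H h s a"
    unfolding a_def by (rule Max_eqI) (auto intro: greedy)
  finally have Vh_eq: "Vhat r \<phi> (K k) H h s = r s a + (SUP \<theta>\<in>K k. \<theta> \<bullet> v)"
    unfolding Q v_def .
  have Vp_eq: "Vpi r P H (\<pi> k) h s = r s a + (\<Sum>t\<in>UNIV. P s a t * Vpn t)"
    unfolding Vpi_def Vpn_def hH Vpi_aux.simps a_def by simp
  have lin: "(\<Sum>t\<in>UNIV. P s a t * Vn t) = \<theta>star \<bullet> v"
    unfolding P_def trans_def v_def phiV_def by (simp add: inner_sum_right mult.commute)
  have sup: "(SUP \<theta>\<in>K k. \<theta> \<bullet> v) \<le> \<theta>star \<bullet> v + 2 * m"
  proof (rule cSUP_least)
    show "K k \<noteq> {}" using E0 by blast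
  next
    fix \<theta> assume th: "\<theta> \<in> K k"
    have b1: "\<theta> \<bullet> v - \<theta>star \<bullet> v \<le> 2 * (\<gamma> k * wnorm (matrix_inv (Mall k)) v)"
    proof -
      have e1: "wnorm (Mall k) (\<theta> - \<theta>all k) \<le> \<gamma> k" "wnorm (Mall k) (\<theta>star - \<theta>all k) \<le> \<gamma> k"
        using th E0[of k] unfolding K_def ellipsoid_def by auto
      have "\<theta> \<bullet> v - \<theta>star \<bullet> v = (\<theta> - \<theta>all k) \<bullet> v - (\<theta>star - \<theta>all k) \<bullet> v"
        by (simp add: inner_diff_left)
      then show ?thesis using ell_bound[OF Mall_pd e1(1), of v] ell_bound[OF Mall_pd e1(2), of v] by linarith
    qed
    have b2: "\<theta> \<bullet> v - \<theta>star \<bullet> v \<le> 2 * (\<beta> k * wnorm (matrix_inv (Mon k)) v)"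
    proof -
      have e1: "wnorm (Mon k) (\<theta> - \<theta>on k) \<le> \<beta> k" "wnorm (Mon k) (\<theta>star - \<theta>on k) \<le> \<beta> k"
        using th E0[of k] unfolding K_def ellipsoid_def by auto
      have "\<theta> \<bullet> v - \<theta>star \<bullet> v = (\<theta> - \<theta>on k) \<bullet> v - (\<theta>star - \<theta>on k) \<bullet> v"
        by (simp add: inner_diff_left)
      then show ?thesis using ell_bound[OF Mon_pd e1(1), of v] ell_bound[OF Mon_pd e1(2), of v] by linarith
    qed
    show "\<theta> \<bullet> v \<le> \<theta>star \<bullet> v + 2 * m" using b1 b2 unfolding m_def by linarith
  qed
  have diff: "(\<Sum>t\<in>UNIV. P s a t * (Vn t - Vpn t)) = (\<Sum>t\<in>UNIV. P s a t * Vn t) - (\<Sum>t\<in>UNIV. P s a t * Vpn t)"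
    by (simp add: right_diff_distrib sum_subtractf)
  show ?thesis
    unfolding Let_def s_def[symmetric] a_def[symmetric] Vn_def[symmetric] Vpn_def[symmetric]
      v_def[symmetric] m_def[symmetric] Vh_eq Vp_eq diff lin
    using sup by linarith
qed

end
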